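(* Let $G$ be a maximal $1$-plane graph with at least $4$ vertices in which every edge lies in some $K_4$-subgraph, and let $\{G_i\}_{i\in\{0,\dots,N\}}$ be a $K_4$-extension sequence of $G$ determined by the SWM*-rule, with $G_i=G[V(G_{i-1})\cup V(F_i)]$. For $i\in\{1,\dots,N\}$ let $F_i'$ be the subgraph of $G_i$ induced by the edge set $E(G_i)\setminus E(G_{i-1})$. Let $i\in\{1,\dots,N\}$ and $e\in E(F_i)$. Then every cut-vertex $w$ of $F_i'-e$ lies in $V(F_i)\setminus V(G_{i-1})$, and each component of $F_i'-e-w$ contains vertices of $G_{i-1}$.
   Context: A $1$-plane graph is a simple graph drawn in the plane (vertices distinct points, edges arcs joining their ends, no edge crossing itself, two edges crossing at most once, adjacent edges not crossing) so that every edge is crossed at most once; it is maximal if no edge joining two non-adjacent vertices can be added so that the result is still a simple $1$-plane graph. An edge is clean if it crosses no other edge. If edge $ux$ crosses another edge at point $\alpha$, the arc $u\alpha$ is the near half-edge of $ux$ incident with $u$. Two edge segments are consecutive on the boundary of a face if they are consecutive on one of the closed walks forming that boundary. $G[A]$ is the subgraph induced by $A$ (a vertex set), and for an edge set $A$, the subgraph induced by $A$ has edge set $A$ and vertex set the ends of edges in $A$. For a vertex-induced subgraph $G'$ and a $K_4$-subgraph $F$ of $G$ with $1\le|V(F)\cap V(G')|\le 3$, $F$ is a strong/weak/micro $K_4$-link from $G'$ when $|V(F)\cap V(G')|=3/2/1$, and $G[V(G')\cup V(F)]$ is the corresponding $K_4$-extension of $G'$. SWM*-rule for a proper vertex-induced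 subgraph $G'$: choose any strong $K_4$-link from $G'$ if one exists; otherwise any weak one if one exists; otherwise choose $u\in V(G')$ with $N_G(u)\not\subseteq V(G')$, then $x\in N_G(u)\setminus V(G')$ such that for some $w\in N_G(u)\cap V(G')$ the edge $ux$ (or its near half-edge at $u$) and $uw$ (or its near half-edge at $u$) are consecutive on the boundary of some face of $G$; if $ux$ is clean choose any $K_4$-subgraph containing $ux$, and if $ux$ crosses edge $st$ choose $G[\{u,x,s,t\}]$. A $K_4$-extension sequence determined by the SWM*-rule is $G_0\cong K_4$, $G_N=G$, $G_i=G[V(G_{i-1})\cup V(F_i)]$ with $F_i$ a $K_4$-link from $G_{i-1}$ chosen by the SWM*-rule. *)

theory Defs
  imports "HOL-Analysis.Analysis"
begin

text \<open>A graph is given by a vertex set V and an edge set E of 2-element vertex sets.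
  A drawing assigns to each vertex a point p v and to each edge e an arc c e
  (parametrised on [0,1]).\<close>

definition drawing_points :: "'v set \<Rightarrow> 'v set set \<Rightarrow> ('v \<Rightarrow> complex)
    \<Rightarrow> ('v set \<Rightarrow> real \<Rightarrow> complex) \<Rightarrow> complex set" where
  "drawing_points V E p c = p ` V \<union> (\<Union>e\<in>E. path_image (c e))"

definition crosses :: "'v set set \<Rightarrow> ('v set \<Rightarrow> real \<Rightarrow> complex) \<Rightarrow> 'v set \<Rightarrow> 'v set \<Rightarrow> bool" where
  "crosses E c e f \<longleftrightarrow> e \<in> E \<and> f \<in> E \<and> e \<noteq> f \<and> e \<inter> f = {}
      \<and> path_image (c e) \<inter> path_image (c f) \<noteq> {}"

definition clean_edge :: "'v set set \<Rightarrow> ('v set \<Rightarrow> real \<Rightarrow> complex) \<Rightarrow> 'v set \<Rightarrow> bool" where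
  "clean_edge E c e \<longleftrightarrow> \<not> (\<exists>f. crosses E c e f)"

definition one_plane :: "'v set \<Rightarrow> 'v set set \<Rightarrow> ('v \<Rightarrow> complex)
    \<Rightarrow> ('v set \<Rightarrow> real \<Rightarrow> complex) \<Rightarrow> bool" where
  "one_plane V E p c \<longleftrightarrow>
     finite V
   \<and> (\<forall>e\<in>E. \<exists>u v. e = {u, v} \<and> u \<noteq> v \<and> u \<in> V \<and> v \<in> V)
   \<and> inj_on p V
   \<and> (\<forall>e\<in>E. arc (c e) \<and> {pathstart (c e), pathfinish (c e)} = p ` e)
   \<and> (\<forall>e\<in>E. \<forall>v\<in>V. p v \<in> path_image (c e) \<longrightarrow> v \<in> e)
   \<and> (\<forall>e\<in>E. \<forall>f\<in>E. e \<noteq> f \<and> e \<inter> f \<noteq> {} \<longrightarrow>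
          path_image (c e) \<inter> path_image (c f) = p ` (e \<inter> f))
   \<and> (\<forall>e\<in>E. \<forall>f\<in>E. e \<noteq> f \<longrightarrow>
          (\<forall>a b. a \<in> path_image (c e) \<inter> path_image (c f)
               \<and> b \<in> path_image (c e) \<inter> path_image (c f) \<longrightarrow> a = b))
   \<and> (\<forall>e f g. crosses E c e f \<and> crosses E c e g \<longrightarrow> f = g)"

definition maximal_one_plane :: "'v set \<Rightarrow> 'v set set \<Rightarrow> ('v \<Rightarrow> complex)
    \<Rightarrow> ('v set \<Rightarrow> real \<Rightarrow> complex) \<Rightarrow> bool" where
  "maximal_one_plane V E p c \<longleftrightarrow> one_plane V E p c \<and>
     \<not> (\<exists>u v \<gamma>. u \<in> V \<and> v \<in> V \<and> u \<noteq> v \<and> {u, v} \<notin> E \<and>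
            one_plane V (insert {u, v} E) p (c({u, v} := \<gamma>)))"

definition oriented_edge :: "('v \<Rightarrow> complex) \<Rightarrow> ('v set \<Rightarrow> real \<Rightarrow> complex)
    \<Rightarrow> 'v \<Rightarrow> 'v set \<Rightarrow> real \<Rightarrow> complex" where
  "oriented_edge p c u e = (if pathstart (c e) = p u then c e else reversepath (c e))"

text \<open>The edge segment of e at its end u: the whole edge if e is clean, otherwise the
  near half-edge of e incident with u (from p u to the crossing point).\<close>
definition near_segment :: "'v set set \<Rightarrow> ('v \<Rightarrow> complex) \<Rightarrow> ('v set \<Rightarrow> real \<Rightarrow> complex)
    \<Rightarrow> 'v \<Rightarrow> 'v set \<Rightarrow> real \<Rightarrow> complex" where
  "near_segment E p c u e =
     (if clean_edge E c e then oriented_edge p c u e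
      else subpath 0 (SOME t. t \<in> {0..1} \<and>
              (\<exists>f. crosses E c e f \<and> oriented_edge p c u e t \<in> path_image (c f)))
             (oriented_edge p c u e))"

text \<open>The segments of the edges e1, e2 at their common end u are consecutive on the
  boundary walk of some face: there is a wedge at u, bounded by initial pieces of the two
  segments and by an arc through the interior of a face, whose inside contains no point of
  the drawing.\<close>
definition consecutive_at :: "'v set \<Rightarrow> 'v set set \<Rightarrow> ('v \<Rightarrow> complex)
    \<Rightarrow> ('v set \<Rightarrow> real \<Rightarrow> complex) \<Rightarrow> 'v \<Rightarrow> 'v set \<Rightarrow> 'v set \<Rightarrow> bool" where
  "consecutive_at V E p c u e1 e2 \<longleftrightarrow>
     (\<exists>s1 s2 \<gamma>. 0 < s1 \<and> s1 \<le> 1 \<and> 0 < s2 \<and> s2 \<le> 1 \<and> arc \<gamma>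
        \<and> pathstart \<gamma> = near_segment E p c u e1 s1
        \<and> pathfinish \<gamma> = near_segment E p c u e2 s2
        \<and> path_image \<gamma> \<inter> drawing_points V E p c = {pathstart \<gamma>, pathfinish \<gamma>}
        \<and> inside (path_image (subpath 0 s1 (near_segment E p c u e1))
                  \<union> path_image \<gamma>
                  \<union> path_image (subpath 0 s2 (near_segment E p c u e2)))
            \<inter> drawing_points V E p c = {})"

text \<open>A K4-subgraph is identified with its (4-element, pairwise adjacent) vertex set.\<close>
definition isK4 :: "'v set \<Rightarrow> 'v set set \<Rightarrow> 'v set \<Rightarrow> bool" where
  "isK4 V E K \<longleftrightarrow> K \<subseteq> V \<and> card K = 4 \<and> (\<forall>a\<in>K. \<forall>b\<in>K. a \<noteq> b \<longrightarrow> {a, b} \<in> E)"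

definition K4_link :: "'v set \<Rightarrow> 'v set set \<Rightarrow> 'v set \<Rightarrow> 'v set \<Rightarrow> bool" where
  "K4_link V E A K \<longleftrightarrow> isK4 V E K \<and> 1 \<le> card (K \<inter> A) \<and> card (K \<inter> A) \<le> 3"

definition SWM_rule :: "'v set \<Rightarrow> 'v set set \<Rightarrow> ('v \<Rightarrow> complex)
    \<Rightarrow> ('v set \<Rightarrow> real \<Rightarrow> complex) \<Rightarrow> 'v set \<Rightarrow> 'v set \<Rightarrow> bool" where
  "SWM_rule V E p c A F \<longleftrightarrow> A \<subseteq> V \<and> A \<noteq> V \<and> K4_link V E A F \<and>
     (if \<exists>K. K4_link V E A K \<and> card (K \<inter> A) = 3 then card (F \<inter> A) = 3
      else if \<exists>K. K4_link V E A K \<and> card (K \<inter> A) = 2 then card (F \<inter> A) = 2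
      else (\<exists>u x w. u \<in> A \<and> x \<in> V - A \<and> {u, x} \<in> E \<and> w \<in> A \<and> {u, w} \<in> E
              \<and> consecutive_at V E p c u {u, x} {u, w}
              \<and> (if clean_edge E c {u, x} then {u, x} \<subseteq> F
                 else (\<exists>s t. crosses E c {u, x} {s, t} \<and> F = {u, x, s, t}))))"

text \<open>Vertex sets of the graphs G_i of a K4-extension sequence: Q 0 = V(G_0),
  Q i = V(F_i) for i \<ge> 1.\<close>
fun ext_vertices :: "(nat \<Rightarrow> 'v set) \<Rightarrow> nat \<Rightarrow> 'v set" where
  "ext_vertices Q 0 = Q 0"
| "ext_vertices Q (Suc i) = ext_vertices Q i \<union> Q (Suc i)"

definition SWM_sequence :: "'v set \<Rightarrow> 'v set set \<Rightarrow> ('v \<Rightarrow> complex)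
    \<Rightarrow> ('v set \<Rightarrow> real \<Rightarrow> complex) \<Rightarrow> nat \<Rightarrow> (nat \<Rightarrow> 'v set) \<Rightarrow> bool" where
  "SWM_sequence V E p c N Q \<longleftrightarrow> isK4 V E (Q 0)
     \<and> (\<forall>i\<in>{1..N}. SWM_rule V E p c (ext_vertices Q (i - 1)) (Q i))
     \<and> ext_vertices Q N = V"

definition adj_rel :: "'v set \<Rightarrow> 'v set set \<Rightarrow> ('v \<times> 'v) set" where
  "adj_rel Vs Es = {(a, b). a \<in> Vs \<and> b \<in> Vs \<and> {a, b} \<in> Es}"

definition components :: "'v set \<Rightarrow> 'v set set \<Rightarrow> 'v set set" where
  "components Vs Es = {{y \<in> Vs. (x, y) \<in> (adj_rel Vs Es)\<^sup>*} | x. x \<in> Vs}"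

definition delete_vertex_edges :: "'v \<Rightarrow> 'v set set \<Rightarrow> 'v set set" where
  "delete_vertex_edges w Es = {e \<in> Es. w \<notin> e}"

definition cut_vertex :: "'v set \<Rightarrow> 'v set set \<Rightarrow> 'v \<Rightarrow> bool" where
  "cut_vertex Vs Es w \<longleftrightarrow> w \<in> Vs \<and>
     card (components (Vs - {w}) (delete_vertex_edges w Es)) > card (components Vs Es)"

definition induced_edges :: "'v set set \<Rightarrow> 'v set \<Rightarrow> 'v set set" where
  "induced_edges E A = {e \<in> E. e \<subseteq> A}"

end

theory Submission imports Defs begin

lemma pick4:
  assumes "card F = 4" shows "\<exists>z\<in>F. z \<noteq> a \<and> z \<noteq> b \<and> z \<noteq> c"
proof (rule ccontr)
  assume "\<not> ?thesis"
  hence "F \<subseteq> {a,b,c}" by auto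
  hence "card F \<le> card {a,b,c}" by (intro card_mono) auto
  also have "\<dots> \<le> 3" by (simp add: card_insert_if)
  finally show False using assms by simp
qed

lemma sym_adj: "sym (adj_rel Vs Es)"
  unfolding adj_rel_def sym_def by (auto simp: insert_commute)

lemma core:
  fixes A F :: "'v set" and E Es :: "'v set set"
  assumes F4: "card F = 4" and Fadj: "\<forall>a\<in>F. \<forall>b\<in>F. a \<noteq> b \<longrightarrow> {a, b} \<in> E"
    and FA1: "F \<inter> A \<noteq> {}" and FA3: "\<not> F \<subseteq> A"
    and Es: "Es = induced_edges E (A \<union> F) - induced_edges E A"
    and fin: "finite (\<Union>Es)"
    and cut: "cut_vertex (\<Union>Es) (Es - {e}) w"
  shows "w \<in> F - A \<and> (\<forall>C \<in> components (\<Union>Es - {w}) (delete_vertex_edges w (Es - {e})). C \<inter> A \<noteq> {})"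
proof -
  define Vs where "Vs = \<Union>Es"
  define Rw where "Rw = adj_rel (Vs - {w}) (delete_vertex_edges w (Es - {e}))"
  define R where "R = adj_rel Vs (Es - {e})"
  have step: "(u, v) \<in> Rw" if "u \<in> F" "v \<in> F" "u \<noteq> v" "u \<notin> A \<or> v \<notin> A" "{u,v} \<noteq> e"
      "u \<noteq> w" "v \<noteq> w" for u v
  proof -
    have "{u,v} \<in> Es" using that Fadj unfolding Es induced_edges_def by auto
    thus ?thesis using that unfolding Rw_def adj_rel_def delete_vertex_edges_def Vs_def by auto
  qed
  have step2: "(u, v) \<in> Rw" if "u \<in> Vs" "v \<in> Vs" "{u,v} \<in> Es" "{u,v} \<noteq> e"
      "u \<noteq> w" "v \<noteq> w" for u v
    using that unfolding Rw_def adj_rel_def delete_vertex_edges_def by auto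
  have symw: "sym (Rw\<^sup>*)" unfolding Rw_def by (intro sym_rtrancl sym_adj)
  have wV: "w \<in> Vs" using cut unfolding cut_vertex_def Vs_def by auto
  have VsAF: "Vs \<subseteq> A \<union> F" unfolding Vs_def Es induced_edges_def by auto
  have wN: "w \<in> F - A"
  proof (rule ccontr)
    assume "w \<notin> F - A"
    hence wA: "w \<in> A" using wV VsAF by auto
    obtain n0 where n0: "n0 \<in> F" "n0 \<notin> A" using FA3 by auto
    have alpha: "(n, n0) \<in> Rw\<^sup>*" if "n \<in> F" "n \<notin> A" for n
    proof (cases "n = n0")
      case True thus ?thesis by simp
    next
      case False
      show ?thesis
      proof (cases "{n,n0} = e")
        case False
        thus ?thesis using step[of n n0] `n \<noteq> n0` that n0 wA by auto
      next
        case True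
        obtain z where z: "z \<in> F" "z \<noteq> n" "z \<noteq> n0" "z \<noteq> w" using pick4[OF F4] by blast
        have "(n, z) \<in> Rw" using step[of n z] z that wA True by auto
        moreover have "(z, n0) \<in> Rw" using step[of z n0] z n0 wA True by auto
        ultimately show ?thesis by auto
      qed
    qed
    have L: "(x, n0) \<in> Rw\<^sup>*" if "x \<in> Vs" "x \<noteq> w" "(x, z) \<in> R" for x z
    proof -
      have xz: "{x,z} \<in> Es" "{x,z} \<noteq> e" "z \<in> Vs" using that unfolding R_def adj_rel_def by auto
      hence "x \<in> F \<and> x \<notin> A \<or> z \<in> F \<and> z \<notin> A" unfolding Es induced_edges_def by auto
      thus ?thesis
      proof
        assume "x \<in> F \<and> x \<notin> A" thus ?thesis using alpha by auto
      next
        assume zN: "z \<in> F \<and> z \<notin> A"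
        hence "z \<noteq> w" using wA by auto
        hence "(x, z) \<in> Rw" using step2[of x z] xz that by auto
        thus ?thesis using alpha zN by (meson converse_rtrancl_into_rtrancl)
      qed
    qed
    have sub: "components (Vs - {w}) (delete_vertex_edges w (Es - {e}))
         \<subseteq> (\<lambda>D. D - {w}) ` components Vs (Es - {e})"
    proof
      fix C assume "C \<in> components (Vs - {w}) (delete_vertex_edges w (Es - {e}))"
      then obtain x where x: "x \<in> Vs - {w}" and C: "C = {y \<in> Vs - {w}. (x, y) \<in> Rw\<^sup>*}"
        unfolding components_def Rw_def by auto
      let ?D = "{y \<in> Vs. (x, y) \<in> R\<^sup>*}"
      have "Rw \<subseteq> R" unfolding Rw_def R_def adj_rel_def delete_vertex_edges_def by auto
      hence mono: "Rw\<^sup>* \<subseteq> R\<^sup>*" by (rule rtrancl_mono)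
      have "C = ?D - {w}"
      proof
        show "C \<subseteq> ?D - {w}" using C mono by auto
      next
        show "?D - {w} \<subseteq> C"
        proof
          fix y assume y: "y \<in> ?D - {w}"
          hence xy: "(x, y) \<in> R\<^sup>*" by auto
          show "y \<in> C"
          proof (cases "x = y")
            case True thus ?thesis using C x by auto
          next
            case False
            from xy False obtain z where "(x, z) \<in> R" by (metis converse_rtranclE)
            hence 1: "(x, n0) \<in> Rw\<^sup>*" using L x by auto
            from xy False obtain z' where "(z', y) \<in> R" by (metis rtranclE)
            hence "(y, z') \<in> R" unfolding R_def adj_rel_def by (auto simp: insert_commute)
            hence "(y, n0) \<in> Rw\<^sup>*" using L y by auto
            hence "(n0, y) \<in> Rw\<^sup>*" using symw by (meson symD)
            thus ?thesis using 1 C y by auto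
          qed
        qed
      qed
      moreover have "?D \<in> components Vs (Es - {e})" unfolding components_def R_def using x by auto
      ultimately show "C \<in> (\<lambda>D. D - {w}) ` components Vs (Es - {e})" by blast
    qed
    have finc: "finite (components Vs (Es - {e}))"
    proof -
      have "components Vs (Es - {e}) \<subseteq> Pow Vs" unfolding components_def by auto
      thus ?thesis using fin Vs_def finite_Pow_iff finite_subset by metis
    qed
    have "card (components (Vs - {w}) (delete_vertex_edges w (Es - {e})))
        \<le> card ((\<lambda>D. D - {w}) ` components Vs (Es - {e}))"
      using sub finc by (intro card_mono) auto
    also have "\<dots> \<le> card (components Vs (Es - {e}))" using finc by (rule card_image_le)
    finally show False using cut unfolding cut_vertex_def Vs_def by auto
  qed
  have beta: "\<exists>a\<in>A. (n, a) \<in> Rw\<^sup>*" if "n \<in> F" "n \<notin> A" "n \<noteq> w" for n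
  proof -
    obtain a where a: "a \<in> F" "a \<in> A" using FA1 by auto
    show ?thesis
    proof (cases "{n,a} = e")
      case False
      hence "(n, a) \<in> Rw" using step[of n a] a that wN by auto
      thus ?thesis using a by auto
    next
      case True
      obtain z where z: "z \<in> F" "z \<noteq> n" "z \<noteq> a" "z \<noteq> w" using pick4[OF F4] by blast
      show ?thesis
      proof (cases "z \<in> A")
        case True
        hence "(n, z) \<in> Rw" using step[of n z] z that `{n,a} = e` by auto
        thus ?thesis using True by auto
      next
        case False
        have "(n, z) \<in> Rw" using step[of n z] z that `{n,a} = e` by auto
        moreover have "(z, a) \<in> Rw" using step[of z a] z a False wN `{n,a} = e` by auto
        ultimately show ?thesis using a by (meson converse_rtrancl_into_rtrancl r_into_rtrancl)
      qed
    qed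
  qed
  have "C \<inter> A \<noteq> {}" if Cin: "C \<in> components (Vs - {w}) (delete_vertex_edges w (Es - {e}))" for C
  proof -
    obtain x where x: "x \<in> Vs - {w}" and C: "C = {y \<in> Vs - {w}. (x, y) \<in> Rw\<^sup>*}"
      using Cin unfolding components_def Rw_def by blast
    show ?thesis
    proof (cases "x \<in> A")
      case True thus ?thesis using x C by auto
    next
      case False
      hence "x \<in> F" using x VsAF by auto
      then obtain a where a: "a \<in> A" "(x, a) \<in> Rw\<^sup>*" using beta False x by auto
      have "a \<in> Vs - {w}"
      proof (cases "x = a")
        case True thus ?thesis using x by simp
      next
        case False
        then obtain z where "(z, a) \<in> Rw" using a(2) by (metis rtranclE)
        thus ?thesis unfolding Rw_def adj_rel_def by auto
      qed
      thus ?thesis using a C by auto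
    qed
  qed
  thus ?thesis using wN unfolding Vs_def by auto
qed

theorem lemma4p4:
  fixes V :: "'v set" and E :: "'v set set"
    and p :: "'v \<Rightarrow> complex" and c :: "'v set \<Rightarrow> real \<Rightarrow> complex"
    and N :: nat and Q :: "nat \<Rightarrow> 'v set" and i :: nat and e :: "'v set" and w :: 'v
  assumes "maximal_one_plane V E p c"
    and "card V \<ge> 4"
    and "\<forall>f\<in>E. \<exists>K. isK4 V E K \<and> f \<subseteq> K"
    and "SWM_sequence V E p c N Q"
    and "i \<in> {1..N}"
    and "e \<in> induced_edges E (Q i)"
    and "cut_vertex (\<Union>(induced_edges E (ext_vertices Q i) - induced_edges E (ext_vertices Q (i - 1))))
                    (induced_edges E (ext_vertices Q i) - induced_edges E (ext_vertices Q (i - 1)) - {e}) w"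
  shows "w \<in> Q i - ext_vertices Q (i - 1) \<and>
         (\<forall>C \<in> components
                (\<Union>(induced_edges E (ext_vertices Q i) - induced_edges E (ext_vertices Q (i - 1))) - {w})
                (delete_vertex_edges w
                   (induced_edges E (ext_vertices Q i) - induced_edges E (ext_vertices Q (i - 1)) - {e})).
             C \<inter> ext_vertices Q (i - 1) \<noteq> {})"
proof -
  define A where "A = ext_vertices Q (i - 1)"
  define F where "F = Q i"
  have op: "one_plane V E p c" using assms(1) unfolding maximal_one_plane_def by auto
  have "\<forall>i\<in>{1..N}. SWM_rule V E p c (ext_vertices Q (i - 1)) (Q i)"
    using assms(4) unfolding SWM_sequence_def by (rule conjunct1[OF conjunct2])
  hence rule: "SWM_rule V E p c A F" using assms(5) unfolding A_def F_def by blast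
  have lk: "K4_link V E A F" using rule unfolding SWM_rule_def by (rule conjunct1[OF conjunct2[OF conjunct2]])
  hence F4: "card F = 4" and Fadj: "\<forall>a\<in>F. \<forall>b\<in>F. a \<noteq> b \<longrightarrow> {a, b} \<in> E"
    and c1: "1 \<le> card (F \<inter> A)" and c3: "card (F \<inter> A) \<le> 3"
    unfolding K4_link_def isK4_def by auto
  have finF: "finite F" using F4 by (metis card.infinite zero_neq_numeral)
  have FA1: "F \<inter> A \<noteq> {}" using c1 by auto
  have FA3: "\<not> F \<subseteq> A"
  proof
    assume "F \<subseteq> A" hence "F \<inter> A = F" by auto
    thus False using F4 c3 by simp
  qed
  obtain j where j: "i = Suc j" using assms(5) by (cases i) auto
  have ext: "ext_vertices Q i = A \<union> F"
    unfolding A_def F_def j by simp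
  define Es where "Es = induced_edges E (A \<union> F) - induced_edges E A"
  have Ecl: "\<forall>e\<in>E. \<exists>u v. e = {u,v} \<and> u\<noteq>v \<and> u\<in>V \<and> v\<in>V" and finV: "finite V"
    using op unfolding one_plane_def by (rule conjunct1[OF conjunct2], rule conjunct1)
  have "Es \<subseteq> E" unfolding Es_def induced_edges_def by auto
  moreover have "\<Union>E \<subseteq> V"
  proof
    fix x assume "x \<in> \<Union>E"
    then obtain g where g: "g \<in> E" "x \<in> g" by blast
    then obtain u v where "g = {u,v}" "u \<in> V" "v \<in> V" using Ecl by meson
    thus "x \<in> V" using g by auto
  qed
  ultimately have "\<Union>Es \<subseteq> V" by blast
  hence fin: "finite (\<Union>Es)" using finV by (rule finite_subset)
  have cut: "cut_vertex (\<Union>Es) (Es - {e}) w" using assms(7) unfolding Es_def ext A_def .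
  show ?thesis using core[OF F4 Fadj FA1 FA3 Es_def fin cut] unfolding ext Es_def A_def F_def .
qed

end
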